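(* For no choice of a natural number $k$ and nonnegative numbers $p_1,\dots,p_k$ with $p_1+\dots+p_k=1$ does the algorithm MinIndex$(k,p_1,\dots,p_k)$ achieve a guarantee larger than $5/9$ on forests of maximum degree three in the adversarial edge arrival model. That is, for every such parameters and every $\gamma>5/9$ there exists a forest of maximum degree at most three with an edge arrival order and a timepoint $t$ such that $\mathbb{E}[|M|]<\gamma\,\nu(G_t)$, where $M$ is the matching returned by MinIndex at time $t$.
   Context: MinIndex$(k,p_1,\dots,p_k)$: it maintains $k$ matchings $M_1,\dots,M_k$, initially empty. When an edge $e$ arrives: if $M_i\cup\{e\}$ is not a matching for every $i$, $e$ is rejected; otherwise $e$ is added to $M_i$ for the minimal index $i$ such that $M_i\cup\{e\}$ is a matching. At any time, the algorithm's output is the random matching $M$ equal to $M_i$ with probability $p_i$. The guarantee is $\gamma$ if at every timepoint $\mathbb{E}[|M|]\ge\gamma\,\nu(G_t)$, with $\nu(G_t)$ the maximum matching cardinality of the graph of arrived edges $G_t$. *)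

theory Defs
  imports Complex_Main
begin

type_synonym 'v edge = "'v set"

text \<open>Simple undirected graphs are given by a finite set of edges, each edge a 2-element vertex set.\<close>

definition is_edge :: "'v edge \<Rightarrow> bool" where
  "is_edge e \<longleftrightarrow> card e = 2"

definition is_matching :: "'v edge set \<Rightarrow> bool" where
  "is_matching M \<longleftrightarrow> (\<forall>e\<in>M. \<forall>f\<in>M. e \<noteq> f \<longrightarrow> e \<inter> f = {})"

definition max_matching_size :: "'v edge set \<Rightarrow> nat" where
  "max_matching_size E = Max (card ` {M. M \<subseteq> E \<and> is_matching M})"

definition degree :: "'v edge set \<Rightarrow> 'v \<Rightarrow> nat" where
  "degree E v = card {e\<in>E. v \<in> e}"

definition max_degree_le :: "'v edge set \<Rightarrow> nat \<Rightarrow> bool" where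
  "max_degree_le E d \<longleftrightarrow> (\<forall>v. degree E v \<le> d)"

definition is_cycle :: "'v edge set \<Rightarrow> 'v list \<Rightarrow> bool" where
  "is_cycle E vs \<longleftrightarrow> length vs \<ge> 3 \<and> distinct vs \<and>
     (\<forall>i<length vs. {vs ! i, vs ! ((i + 1) mod length vs)} \<in> E)"

definition is_forest :: "'v edge set \<Rightarrow> bool" where
  "is_forest E \<longleftrightarrow> (\<nexists>vs. is_cycle E vs)"

text \<open>State of MinIndex: matchings M_1..M_k, encoded as a function on indices 1..k.\<close>
definition minindex_step :: "nat \<Rightarrow> (nat \<Rightarrow> 'v edge set) \<Rightarrow> 'v edge \<Rightarrow> (nat \<Rightarrow> 'v edge set)" where
  "minindex_step k Ms e =
     (if \<exists>i\<in>{1..k}. is_matching (insert e (Ms i))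
      then (let i = (LEAST i. 1 \<le> i \<and> i \<le> k \<and> is_matching (insert e (Ms i)))
            in Ms(i := insert e (Ms i)))
      else Ms)"

definition minindex_run :: "nat \<Rightarrow> 'v edge list \<Rightarrow> (nat \<Rightarrow> 'v edge set)" where
  "minindex_run k es = foldl (minindex_step k) (\<lambda>_. {}) es"

text \<open>Expected size of the output matching: M = M_i with probability p_i.\<close>
definition minindex_expected :: "nat \<Rightarrow> (nat \<Rightarrow> real) \<Rightarrow> 'v edge list \<Rightarrow> real" where
  "minindex_expected k p es = (\<Sum>i=1..k. p i * real (card (minindex_run k es i)))"

end

theory Submission
  imports Defs
begin


lemma matching_insert:
  assumes "is_matching M" "\<forall>f\<in>M. e \<inter> f = {}"
  shows "is_matching (insert e M)"
  using assms unfolding is_matching_def by (auto simp: Int_commute)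

lemma not_matching_insert:
  assumes "f \<in> M" "f \<noteq> e" "e \<inter> f \<noteq> {}"
  shows "\<not> is_matching (insert e M)"
  using assms unfolding is_matching_def by blast

lemma run_colors:
  fixes col :: "'v edge \<Rightarrow> nat"
  assumes "distinct es" "sorted (map col es)"
    "\<forall>e\<in>set es. col e \<ge> 1"
    "\<forall>e\<in>set es. \<forall>f\<in>set es. e \<noteq> f \<longrightarrow> e \<inter> f \<noteq> {} \<longrightarrow> col e \<noteq> col f"
    "\<forall>e\<in>set es. \<forall>i. 1 \<le> i \<and> i < col e \<longrightarrow> (\<exists>f\<in>set es. e \<inter> f \<noteq> {} \<and> col f = i)"
  shows "\<forall>i\<in>{1..k}. minindex_run k es i = {e\<in>set es. col e = i}"
  using assms
proof (induction es rule: rev_induct)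
  case Nil
  then show ?case by (simp add: minindex_run_def)
next
  case (snoc x xs)
  have dx: "distinct xs" "x \<notin> set xs" using snoc.prems(1) by auto
  have sx: "sorted (map col xs)" and sle: "\<forall>f\<in>set xs. col f \<le> col x"
    using snoc.prems(2) by (auto simp: sorted_append)
  have g2x: "\<forall>e\<in>set xs. \<forall>i. 1 \<le> i \<and> i < col e \<longrightarrow> (\<exists>f\<in>set xs. e \<inter> f \<noteq> {} \<and> col f = i)"
  proof (intro ballI allI impI)
    fix e i assume e: "e \<in> set xs" and i: "1 \<le> i \<and> i < col e"
    have e': "e \<in> set (xs @ [x])" using e by simp
    have "\<exists>f\<in>set (xs @ [x]). e \<inter> f \<noteq> {} \<and> col f = i"
      using bspec[OF snoc.prems(5) e'] i by blast
    then obtain f where f: "f \<in> set (xs @ [x])" "e \<inter> f \<noteq> {}" "col f = i" by blast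
    have "f \<noteq> x" using f(3) i sle e by fastforce
    then show "\<exists>f\<in>set xs. e \<inter> f \<noteq> {} \<and> col f = i" using f by auto
  qed
  have IH: "\<forall>i\<in>{1..k}. minindex_run k xs i = {e\<in>set xs. col e = i}"
    using snoc.IH[OF dx(1) sx] snoc.prems(3,4) g2x by auto
  define Ms where "Ms = minindex_run k xs"
  have run: "minindex_run k (xs @ [x]) = minindex_step k Ms x"
    by (simp add: minindex_run_def Ms_def)
  define j where "j = col x"
  have j1: "j \<ge> 1" using snoc.prems(3) j_def by auto
  have low: "\<not> is_matching (insert x (Ms i))" if "i \<in> {1..k}" "i < j" for i
  proof -
    have x': "x \<in> set (xs @ [x])" by simp
    have "\<exists>f\<in>set (xs @ [x]). x \<inter> f \<noteq> {} \<and> col f = i"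
      using bspec[OF snoc.prems(5) x'] that j_def by auto
    then obtain f where f: "f \<in> set (xs @ [x])" "x \<inter> f \<noteq> {}" "col f = i" by blast
    have fx: "f \<noteq> x" using f(3) that j_def by auto
    have "f \<in> Ms i" using IH that f fx Ms_def by auto
    then show ?thesis using not_matching_insert fx f(2) by blast
  qed
  have same: "x \<inter> f = {}" if "f \<in> set xs" "col f = j" for f
    using snoc.prems(4) that dx(2) j_def by force
  have cls_match: "is_matching {e\<in>set xs. col e = i}" for i
    unfolding is_matching_def
  proof (intro ballI impI)
    fix e f assume ef: "e \<in> {e\<in>set xs. col e = i}" "f \<in> {e\<in>set xs. col e = i}" "e \<noteq> f"
    have m: "e \<in> set (xs @ [x])" "f \<in> set (xs @ [x])" using ef by auto
    have "e \<inter> f \<noteq> {} \<longrightarrow> col e \<noteq> col f" using bspec[OF bspec[OF snoc.prems(4) m(1)] m(2)] ef(3) by blast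
    then show "e \<inter> f = {}" using ef by auto
  qed
  show ?case
  proof (cases "j \<le> k")
    case True
    have jk: "j \<in> {1..k}" using True j1 by auto
    have okj: "is_matching (insert x (Ms j))"
      using matching_insert[OF cls_match[of j]] same IH jk Ms_def by auto
    have ex: "\<exists>i\<in>{1..k}. is_matching (insert x (Ms i))" using okj jk by blast
    have L: "(LEAST i. 1 \<le> i \<and> i \<le> k \<and> is_matching (insert x (Ms i))) = j"
    proof (rule Least_equality)
      show "1 \<le> j \<and> j \<le> k \<and> is_matching (insert x (Ms j))" using jk okj by auto
    next
      fix y assume "1 \<le> y \<and> y \<le> k \<and> is_matching (insert x (Ms y))"
      then show "j \<le> y" using low by (meson atLeastAtMost_iff not_le)
    qed
    have st: "minindex_step k Ms x = Ms(j := insert x (Ms j))"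
      unfolding minindex_step_def using ex L by (simp add: Let_def)
    show ?thesis
    proof
      fix i assume i: "i \<in> {1..k}"
      show "minindex_run k (xs @ [x]) i = {e \<in> set (xs @ [x]). col e = i}"
      proof -
        have r: "minindex_run k (xs @ [x]) i = (Ms(j := insert x (Ms j))) i" using run st by simp
        have Mi: "Ms i = {e\<in>set xs. col e = i}" using IH i Ms_def by auto
        show ?thesis
        proof (cases "i = j")
          case True then show ?thesis using r Mi j_def by auto
        next
          case False then show ?thesis using r Mi j_def by auto
        qed
      qed
    qed
  next
    case False
    have nex: "\<not> (\<exists>i\<in>{1..k}. is_matching (insert x (Ms i)))"
      using low False by auto
    have st: "minindex_step k Ms x = Ms" unfolding minindex_step_def using nex by simp
    show ?thesis
    proof
      fix i assume i: "i \<in> {1..k}"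
      have "col x \<noteq> i" using i False j_def by auto
      then show "minindex_run k (xs @ [x]) i = {e \<in> set (xs @ [x]). col e = i}"
      proof -
        have r: "minindex_run k (xs @ [x]) i = Ms i" using run st by simp
        have Mi: "Ms i = {e\<in>set xs. col e = i}" using IH i Ms_def by auto
        show ?thesis using r Mi \<open>col x \<noteq> i\<close> by auto
      qed
    qed
  qed
qed



lemma forest_par:
  fixes par :: "nat \<Rightarrow> nat"
  assumes "\<forall>e\<in>E. \<exists>v. e = {v, par v} \<and> par v < v"
  shows "is_forest E"
  unfolding is_forest_def
proof
  assume "\<exists>vs. is_cycle E vs"
  then obtain vs where c: "is_cycle E vs" by blast
  define n where "n = length vs"
  have n3: "n \<ge> 3" and dvs: "distinct vs"
    and adj: "\<forall>i<n. {vs ! i, vs ! ((i + 1) mod n)} \<in> E"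
    using c unfolding is_cycle_def n_def by auto
  define w where "w = Max (set vs)"
  have ne: "set vs \<noteq> {}" using n3 n_def by auto
  have "w \<in> set vs" unfolding w_def using ne by simp
  then obtain i where i: "i < n" "vs ! i = w" unfolding n_def by (meson in_set_conv_nth)
  have wmax: "\<And>x. x \<in> set vs \<Longrightarrow> x \<le> w" unfolding w_def by simp
  have key: "x = par w" if h: "{w, x} \<in> E" "x \<noteq> w" "x \<le> w" for x
  proof -
    obtain v where v: "{w, x} = {v, par v}" "par v < v" using bspec[OF assms h(1)] by iprover
    have "(w = v \<and> x = par v) \<or> (w = par v \<and> x = v)" using v(1) by (simp add: doubleton_eq_iff)
    then show ?thesis using v(2) h(3) by auto
  qed
  define a where "a = (i + 1) mod n"
  define b where "b = (i + n - 1) mod n"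
  have adef: "a = (if i + 1 = n then 0 else i + 1)"
    unfolding a_def using i(1) by auto
  have bdef: "b = (if i = 0 then n - 1 else i - 1)"
  proof (cases "i = 0")
    case True then show ?thesis unfolding b_def using n3 by simp
  next
    case False
    then have eq: "i + n - 1 = (i - 1) + n" by simp
    have "((i - 1) + n) mod n = i - 1" using i(1) by simp
    then show ?thesis unfolding b_def using eq False by simp
  qed
  have an: "a < n" "b < n" using n3 i(1) unfolding adef bdef by auto
  have ab: "a \<noteq> b" "a \<noteq> i" "b \<noteq> i"
    using i(1) n3 unfolding adef bdef by auto
  have bsucc: "(b + 1) mod n = i"
    using i(1) n3 unfolding bdef by auto
  have e1: "{w, vs ! a} \<in> E" using adj i a_def by auto
  have "{vs ! b, vs ! ((b + 1) mod n)} \<in> E" using adj an(2) by blast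
  then have e2: "{w, vs ! b} \<in> E" using bsucc i(2) by (simp add: insert_commute)
  have va: "vs ! a \<noteq> w" "vs ! b \<noteq> w" "vs ! a \<noteq> vs ! b"
    using dvs an ab i unfolding n_def by (auto simp: nth_eq_iff_index_eq)
  have sa: "vs ! a \<in> set vs" "vs ! b \<in> set vs" using an n_def by auto
  have "vs ! a = par w" using key[OF e1 va(1) wmax[OF sa(1)]] .
  moreover have "vs ! b = par w" using key[OF e2 va(2) wmax[OF sa(2)]] .
  ultimately show False using va(3) by simp
qed



definition pdL :: "nat list" where "pdL = [9,1,2,1,1,1,3,1,2,1,1,1,1,3,1,1,1,3]"
definition vcL :: "nat list" where "vcL = [2,3,1,3,4,1,2,3,1,4,3,1,2,4,2,1,2,3]"
definition pd :: "nat \<Rightarrow> nat" where "pd r = pdL ! r"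
definition vc :: "nat \<Rightarrow> nat" where "vc r = vcL ! r"
definition inO :: "nat \<Rightarrow> bool" where "inO r \<longleftrightarrow> r \<in> {1,3,5,7,9,12,13,16,17}"

lemma chk_pd: "\<forall>r\<in>set [0..<18]. pd r \<in> {1,2,3,9}"
  unfolding pd_def pdL_def by code_simp

lemma chk_vc: "\<forall>r\<in>set [0..<18]. vc r \<in> {1,2,3,4}"
  unfolding vc_def vcL_def by code_simp

lemma chk_pc: "\<forall>r\<in>set [0..<18]. \<forall>s\<in>set [0..<18].
   (r + pd s) mod 18 = s \<longrightarrow> vc r \<noteq> vc s \<and> \<not>(inO r \<and> inO s)"
  unfolding pd_def vc_def pdL_def vcL_def inO_def by code_simp

lemma chk_sib: "\<forall>rw\<in>set [0..<18]. \<forall>ru\<in>set [0..<18]. \<forall>ru'\<in>set [0..<18].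
   (rw + pd ru) mod 18 = ru \<and> (rw + pd ru') mod 18 = ru' \<and> pd ru \<noteq> pd ru' \<longrightarrow> vc ru \<noteq> vc ru' \<and> \<not>(inO ru \<and> inO ru')"
  unfolding pd_def vc_def pdL_def vcL_def inO_def by code_simp

lemma chk_deg: "\<forall>r\<in>set [0..<18]. length (filter (\<lambda>d. pd ((r + d) mod 18) = d) [1,2,3,9]) \<le> 2"
  unfolding pd_def pdL_def by code_simp

lemma chk_g2: "\<forall>x\<in>set [18..<36]. \<forall>i\<in>set [1,2,3]. i < vc (x mod 18) \<longrightarrow>
   (\<exists>y\<in>set [18..<39]. y \<le> (if x \<le> 20 then 20 else 38) \<and>
      (y = x \<or> y = x - pd (x mod 18) \<or> y - pd (y mod 18) = x \<or> y - pd (y mod 18) = x - pd (x mod 18)) \<and>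
      vc (y mod 18) = i)"
  unfolding pd_def vc_def pdL_def vcL_def by code_simp




definition par :: "nat \<Rightarrow> nat" where "par v = v - pd (v mod 18)"
definition ed :: "nat \<Rightarrow> nat edge" where "ed v = {v, par v}"

lemma pd_vals: "pd (v mod 18) \<in> {1,2,3,9}"
  using chk_pd by simp

lemma vc_vals: "vc (v mod 18) \<in> {1,2,3,4}"
  using chk_vc by simp

lemma pd_le: "1 \<le> pd (v mod 18)" "pd (v mod 18) \<le> 9"
  using pd_vals[of v] by auto

lemma par_less: "v \<ge> 18 \<Longrightarrow> par v < v"
  unfolding par_def using pd_le[of v] by simp

lemma par_ge: "v \<ge> 18 \<Longrightarrow> par v \<ge> 9"
  unfolding par_def using pd_le[of v] by simp

lemma Max_ed: "v \<ge> 18 \<Longrightarrow> Max (ed v) = v"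
  unfolding ed_def using par_less[of v] by (simp add: max_def)

lemma ed_inj: "u \<ge> 18 \<Longrightarrow> v \<ge> 18 \<Longrightarrow> ed u = ed v \<Longrightarrow> u = v"
  using Max_ed by metis

lemma card_ed: "v \<ge> 18 \<Longrightarrow> card (ed v) = 2"
  unfolding ed_def using par_less[of v] by simp

lemma child_eq: assumes "u \<ge> 18" "par u = w"
  shows "u = w + pd (u mod 18)" "u mod 18 = (w mod 18 + pd (u mod 18)) mod 18"
proof -
  show 1: "u = w + pd (u mod 18)" using assms pd_le[of u] unfolding par_def by simp
  have "u mod 18 = (w + pd (u mod 18)) mod 18" using 1 by simp
  also have "\<dots> = (w mod 18 + pd (u mod 18)) mod 18" by (simp add: mod_add_left_eq)
  finally show "u mod 18 = (w mod 18 + pd (u mod 18)) mod 18" .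
qed

lemma pc_res: assumes "u \<ge> 18" "par u = w"
  shows "vc (w mod 18) \<noteq> vc (u mod 18) \<and> \<not> (inO (w mod 18) \<and> inO (u mod 18))"
  using chk_pc[rule_format, of "w mod 18" "u mod 18"] child_eq(2)[OF assms] by simp

lemma adj_res:
  assumes "u \<ge> 18" "u' \<ge> 18" "u \<noteq> u'" "ed u \<inter> ed u' \<noteq> {}"
  shows "vc (u mod 18) \<noteq> vc (u' mod 18) \<and> \<not> (inO (u mod 18) \<and> inO (u' mod 18))"
proof -
  have "u = par u' \<or> par u = u' \<or> par u = par u'"
    using assms(3,4) unfolding ed_def by auto
  moreover {
    assume "u = par u'"
    then have ?thesis using pc_res[OF assms(2)] by metis
  } moreover {
    assume "par u = u'"
    then have ?thesis using pc_res[OF assms(1)] by metis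
  } moreover {
    assume h: "par u = par u'"
    define w where "w = par u"
    have a: "u mod 18 = (w mod 18 + pd (u mod 18)) mod 18" using child_eq(2)[OF assms(1)] w_def by simp
    have b: "u' mod 18 = (w mod 18 + pd (u' mod 18)) mod 18" using child_eq(2)[OF assms(2)] w_def h by simp
    have c: "pd (u mod 18) \<noteq> pd (u' mod 18)"
      using child_eq(1)[OF assms(1)] child_eq(1)[OF assms(2)] w_def h assms(3) by metis
    have ?thesis using chk_sib[rule_format, of "w mod 18" "u mod 18" "u' mod 18"] a b c by simp
  }
  ultimately show ?thesis by blast
qed




definition Rng :: "nat \<Rightarrow> nat list" where "Rng m = [18..<18*m+21]"
definition Lst :: "nat \<Rightarrow> nat edge list" where "Lst m = map ed (Rng m)"
definition colE :: "nat edge \<Rightarrow> nat" where "colE e = vc (Max e mod 18)"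
definition inst_es :: "nat \<Rightarrow> nat edge list" where
  "inst_es m = filter (\<lambda>e. colE e = 1) (Lst m) @ filter (\<lambda>e. colE e = 2) (Lst m) @
          filter (\<lambda>e. colE e = 3) (Lst m) @ filter (\<lambda>e. colE e = 4) (Lst m)"

lemma rng_mem: "v \<in> set (Rng m) \<longleftrightarrow> 18 \<le> v \<and> v < 18*m+21"
  unfolding Rng_def by auto

lemma colE_ed: "v \<ge> 18 \<Longrightarrow> colE (ed v) = vc (v mod 18)"
  unfolding colE_def using Max_ed by simp

lemma set_Lst: "set (Lst m) = ed ` set (Rng m)"
  unfolding Lst_def by simp

lemma set_es: "set (inst_es m) = set (Lst m)"
proof -
  have "colE e \<in> {1,2,3,4}" if he: "e \<in> set (Lst m)" for e
  proof -
    obtain v where v: "v \<in> set (Rng m)" "e = ed v" using he unfolding set_Lst by auto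
    then have "colE e = vc (v mod 18)" using colE_ed rng_mem by auto
    then show ?thesis using vc_vals[of v] by simp
  qed
  then show ?thesis unfolding inst_es_def by auto
qed

lemma inj_ed: "inj_on ed (set (Rng m))"
  by (meson ed_inj inj_onI rng_mem)

lemma distinct_Lst: "distinct (Lst m)"
  unfolding Lst_def using inj_ed by (simp add: distinct_map Rng_def)

lemma distinct_es: "distinct (inst_es m)"
  unfolding inst_es_def using distinct_Lst by auto

lemma const_sorted: "\<forall>x\<in>set xs. x = (c::nat) \<Longrightarrow> sorted xs"
  by (induction xs) auto

lemma sorted_es: "sorted (map colE (inst_es m))"
proof -
  have s: "sorted (map colE (filter (\<lambda>e. colE e = c) xs))" for c xs
    by (rule const_sorted[of _ c]) auto
  show ?thesis unfolding inst_es_def using s by (auto simp: sorted_append)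
qed

lemma es_edges: "\<forall>e\<in>set (inst_es m). is_edge e"
  unfolding set_es set_Lst is_edge_def using card_ed rng_mem by auto

lemma es_forest: "is_forest (set (inst_es m))"
  apply (rule forest_par[where par = par])
  unfolding set_es set_Lst ed_def using par_less rng_mem by auto

lemma deg_le: "degree (set (inst_es m)) w \<le> 3"
proof -
  define D where "D = set (filter (\<lambda>d. pd ((w mod 18 + d) mod 18) = d) [1,2,3,9])"
  have sub: "{e \<in> set (inst_es m). w \<in> e} \<subseteq> insert (ed w) (ed ` ((\<lambda>d. w + d) ` D))"
  proof
    fix e assume "e \<in> {e \<in> set (inst_es m). w \<in> e}"
    then obtain u where u: "u \<in> set (Rng m)" "e = ed u" "w \<in> ed u"
      unfolding set_es set_Lst by auto
    have u18: "u \<ge> 18" using u(1) rng_mem by auto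
    show "e \<in> insert (ed w) (ed ` ((\<lambda>d. w + d) ` D))"
    proof (cases "u = w")
      case True then show ?thesis using u by simp
    next
      case False
      then have pw: "par u = w" using u(3) unfolding ed_def by auto
      define d where "d = pd (u mod 18)"
      have ud: "u = w + d" using child_eq(1)[OF u18 pw] d_def by simp
      have "(w mod 18 + d) mod 18 = u mod 18" using child_eq(2)[OF u18 pw] d_def by simp
      then have "pd ((w mod 18 + d) mod 18) = d" using d_def by simp
      moreover have "d \<in> {1,2,3,9}" using pd_vals d_def by simp
      ultimately have "d \<in> D" unfolding D_def by auto
      then show ?thesis using ud u(2) by auto
    qed
  qed
  have fin: "finite (insert (ed w) (ed ` ((\<lambda>d. w + d) ` D)))" unfolding D_def by simp
  have "card {e \<in> set (inst_es m). w \<in> e} \<le> card (insert (ed w) (ed ` ((\<lambda>d. w + d) ` D)))"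
    by (rule card_mono[OF fin sub])
  also have "\<dots> \<le> Suc (card (ed ` ((\<lambda>d. w + d) ` D)))" unfolding D_def by (simp add: card_insert_if)
  also have "card (ed ` ((\<lambda>d. w + d) ` D)) \<le> card D"
    using card_image_le[of D "\<lambda>d. w + d"] card_image_le[of "(\<lambda>d. w + d) ` D" ed] unfolding D_def by simp
  also have "card D \<le> 2"
  proof -
    have "card D \<le> length (filter (\<lambda>d. pd ((w mod 18 + d) mod 18) = d) [1,2,3,9])"
      unfolding D_def by (rule card_length)
    also have "\<dots> \<le> 2" using chk_deg[rule_format, of "w mod 18"] by simp
    finally show ?thesis .
  qed
  finally show ?thesis unfolding degree_def by simp
qed




lemma es_proper: "\<forall>e\<in>set (inst_es m). \<forall>f\<in>set (inst_es m). e \<noteq> f \<longrightarrow> e \<inter> f \<noteq> {} \<longrightarrow> colE e \<noteq> colE f"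
proof (intro ballI impI)
  fix e f assume e: "e \<in> set (inst_es m)" and f: "f \<in> set (inst_es m)" and ne: "e \<noteq> f" and i: "e \<inter> f \<noteq> {}"
  obtain u where u: "u \<in> set (Rng m)" "e = ed u" using e unfolding set_es set_Lst by auto
  obtain u' where u': "u' \<in> set (Rng m)" "f = ed u'" using f unfolding set_es set_Lst by auto
  have g: "u \<ge> 18" "u' \<ge> 18" using u u' rng_mem by auto
  have "u \<noteq> u'" using ne u u' by auto
  then have "vc (u mod 18) \<noteq> vc (u' mod 18)" using adj_res[OF g] i u u' by blast
  then show "colE e \<noteq> colE f" using u u' g colE_ed by simp
qed

lemma es_colpos: "\<forall>e\<in>set (inst_es m). colE e \<ge> 1"
proof
  fix e assume e: "e \<in> set (inst_es m)"
  obtain u where u: "u \<in> set (Rng m)" "e = ed u" using e unfolding set_es set_Lst by auto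
  then show "colE e \<ge> 1" using colE_ed rng_mem vc_vals[of u] by auto
qed

lemma shift_ed: assumes "y \<ge> 18"
  shows "ed (18 * q + y) = {18 * q + y, 18 * q + (y - pd (y mod 18))}"
proof -
  have "(18 * q + y) mod 18 = y mod 18" by simp
  moreover have "pd (y mod 18) \<le> y" using pd_le[of y] assms by simp
  ultimately show ?thesis unfolding ed_def par_def by simp
qed

lemma es_grundy: "\<forall>e\<in>set (inst_es m). \<forall>i. 1 \<le> i \<and> i < colE e \<longrightarrow> (\<exists>f\<in>set (inst_es m). e \<inter> f \<noteq> {} \<and> colE f = i)"
proof (intro ballI allI impI)
  fix e i assume e: "e \<in> set (inst_es m)" and i: "1 \<le> i \<and> i < colE e"
  obtain v where v: "v \<in> set (Rng m)" "e = ed v" using e unfolding set_es set_Lst by auto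
  have v18: "18 \<le> v" "v < 18*m+21" using v rng_mem by auto
  define q where "q = v div 18 - 1"
  define x where "x = v mod 18 + 18"
  have d1: "18 div 18 \<le> v div 18" by (rule div_le_mono[OF v18(1)])
  have dq: "v div 18 = q + 1" unfolding q_def using d1 by simp
  have "v = 18 * (v div 18) + v mod 18" by simp
  then have vqx: "v = 18 * q + x" unfolding x_def using dq by simp
  have xr: "x \<in> set [18..<36]" unfolding set_upt x_def by simp
  have xm: "x mod 18 = v mod 18" unfolding x_def by simp
  have ce: "colE e = vc (x mod 18)" using colE_ed v18 v xm by simp
  have i3: "i \<in> set [1,2,3]" using i ce vc_vals[of x] by auto
  obtain y where y: "y \<in> set [18..<39]" "y \<le> (if x \<le> 20 then 20 else 38)"
     "y = x \<or> y = x - pd (x mod 18) \<or> y - pd (y mod 18) = x \<or> y - pd (y mod 18) = x - pd (x mod 18)"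
     "vc (y mod 18) = i"
  proof -
    have lt: "i < vc (x mod 18)" using i ce by simp
    show ?thesis using chk_g2[rule_format, OF xr i3 lt] that by blast
  qed
  define u where "u = 18 * q + y"
  have y18: "y \<ge> 18" using y(1) unfolding set_upt by simp
  have x18: "x \<ge> 18" using xr unfolding set_upt by simp
  have urng: "u \<in> set (Rng m)"
  proof -
    have "u < 18*m+21"
    proof (cases "x \<le> 20")
      case True
      then have "y \<le> 20" using y(2) by simp
      moreover have "18 * q + 18 \<le> 18*m+20" using vqx v18 x18 by linarith
      ultimately show ?thesis unfolding u_def by presburger
    next
      case False
      then have "18 * q + 21 \<le> 18*m+20" using vqx v18 by linarith
      then have "18 * q + 38 \<le> 18*m+20" by presburger
      then show ?thesis unfolding u_def using y(1) unfolding set_upt by simp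
    qed
    then show ?thesis unfolding u_def rng_mem using y18 by simp
  qed
  have eu: "ed u = {18 * q + y, 18 * q + (y - pd (y mod 18))}" unfolding u_def by (rule shift_ed[OF y18])
  have ev: "e = {18 * q + x, 18 * q + (x - pd (x mod 18))}" using v(2) vqx shift_ed[OF x18] by simp
  have "e \<inter> ed u \<noteq> {}" using y(3) unfolding eu ev by auto
  moreover have "colE (ed u) = i" using colE_ed[of u] y(4) y18 unfolding u_def by simp
  moreover have "ed u \<in> set (inst_es m)" using urng unfolding set_es set_Lst by simp
  ultimately show "\<exists>f\<in>set (inst_es m). e \<inter> f \<noteq> {} \<and> colE f = i" by blast
qed




lemma map_add_upt': "map (\<lambda>r. r + c) [a..<b] = [a + c..<b + c]"
  by (induction b) auto

lemma cnt_step: "length (filter (\<lambda>v. P (v mod 18)) [18..<18 * Suc m + 21]) =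
   length (filter (\<lambda>v. P (v mod 18)) [18..<18 * m + 21]) + length (filter (\<lambda>r. P (r mod 18)) [3..<21])"
proof -
  have a: "[18..<(18 * m + 21) + 18] = [18..<18 * m + 21] @ [18 * m + 21..<(18 * m + 21) + 18]"
    by (rule upt_add_eq_append) simp
  have "18 * Suc m + 21 = (18 * m + 21) + 18" by simp
  then have "[18..<18 * Suc m + 21] = [18..<18 * m + 21] @ [18 * m + 21..<18 * m + 21 + 18]"
    using a by simp
  moreover have "[18 * m + 21..<18 * m + 21 + 18] = map (\<lambda>r. r + 18 * Suc m) [3..<21]"
  proof -
    have h1: "3 + 18 * Suc m = 18 * m + 21" and h2: "21 + 18 * Suc m = 18 * m + 21 + 18" by simp_all
    show ?thesis using map_add_upt'[of "18 * Suc m" 3 21] unfolding h1 h2 by (rule sym)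
  qed
  moreover have "filter (\<lambda>v. P (v mod 18)) (map (\<lambda>r. r + 18 * Suc m) [3..<21]) =
      map (\<lambda>r. r + 18 * Suc m) (filter (\<lambda>r. P (r mod 18)) [3..<21])"
    by (simp add: filter_map o_def)
  ultimately show ?thesis by simp
qed

lemma vc_filter_empty: "i \<notin> {1,2,3,4} \<Longrightarrow> filter (\<lambda>v. vc (v mod 18) = i) xs = []"
  using vc_vals by (induction xs) auto

lemma chk_blk_vc: "\<forall>i\<in>set [1,2,3,4]. length (filter (\<lambda>r. vc (r mod 18) = i) [3..<21]) \<le> 5
   \<and> length (filter (\<lambda>v. vc (v mod 18) = i) [18..<21]) \<le> 1"
  unfolding vc_def vcL_def by code_simp

lemma chk_blk_O: "length (filter (\<lambda>r. inO (r mod 18)) [3..<21]) = 9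
   \<and> length (filter (\<lambda>v. inO (v mod 18)) [18..<21]) = 1"
  unfolding inO_def by code_simp

lemma cnt_vc: "length (filter (\<lambda>v. vc (v mod 18) = i) [18..<18 * m + 21]) \<le> 5 * m + 1"
proof (cases "i \<in> {1,2,3,4}")
  case False then show ?thesis using vc_filter_empty by simp
next
  case True
  then have i: "i \<in> set [1,2,3,4]" by simp
  have b1: "length (filter (\<lambda>r. vc (r mod 18) = i) [3..<21]) \<le> 5"
    and b0: "length (filter (\<lambda>v. vc (v mod 18) = i) [18..<21]) \<le> 1"
    using chk_blk_vc i by blast+
  show ?thesis
  proof (induction m)
    case 0
    have "[18..<18 * 0 + 21] = [18..<(21::nat)]" by simp
    then show ?case using b0 by (simp only: mult_0_right add_0)
  next
    case (Suc m)
    have "5 * Suc m + 1 = 5 * m + 1 + 5" by simp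
    then show ?case using Suc cnt_step[of "\<lambda>r. vc r = i" m] b1 by linarith
  qed
qed

lemma cnt_O: "length (filter (\<lambda>v. inO (v mod 18)) [18..<18 * m + 21]) = 9 * m + 1"
proof -
  have b1: "length (filter (\<lambda>r. inO (r mod 18)) [3..<21]) = 9"
    and b0: "length (filter (\<lambda>v. inO (v mod 18)) [18..<21]) = 1"
    using chk_blk_O by blast+
  show ?thesis
  proof (induction m)
    case 0
    have "[18..<18 * 0 + 21] = [18..<(21::nat)]" by simp
    then show ?case using b0 by (simp only: mult_0_right add_0)
  next
    case (Suc m)
    have "9 * Suc m + 1 = 9 * m + 1 + 9" by simp
    then show ?case using Suc cnt_step[of "\<lambda>r. inO r" m] b1 by linarith
  qed
qed

lemma class_card: "card {e \<in> set (inst_es m). colE e = i} \<le> 5 * m + 1"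
proof -
  have eq: "{e \<in> set (inst_es m). colE e = i} = ed ` set (filter (\<lambda>v. vc (v mod 18) = i) (Rng m))"
  proof
    show "{e \<in> set (inst_es m). colE e = i} \<subseteq> ed ` set (filter (\<lambda>v. vc (v mod 18) = i) (Rng m))"
    proof
      fix e assume "e \<in> {e \<in> set (inst_es m). colE e = i}"
      then obtain v where v: "v \<in> set (Rng m)" "e = ed v" "colE e = i" unfolding set_es set_Lst by auto
      then have "vc (v mod 18) = i" using colE_ed rng_mem by auto
      then show "e \<in> ed ` set (filter (\<lambda>v. vc (v mod 18) = i) (Rng m))" using v by auto
    qed
  next
    show "ed ` set (filter (\<lambda>v. vc (v mod 18) = i) (Rng m)) \<subseteq> {e \<in> set (inst_es m). colE e = i}"
      unfolding set_es set_Lst using colE_ed rng_mem by auto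
  qed
  have "card {e \<in> set (inst_es m). colE e = i} \<le> card (set (filter (\<lambda>v. vc (v mod 18) = i) (Rng m)))"
    unfolding eq by (rule card_image_le) simp
  also have "\<dots> \<le> length (filter (\<lambda>v. vc (v mod 18) = i) (Rng m))" by (rule card_length)
  also have "\<dots> \<le> 5 * m + 1" unfolding Rng_def by (rule cnt_vc)
  finally show ?thesis .
qed

definition Om :: "nat \<Rightarrow> nat edge set" where
  "Om m = ed ` set (filter (\<lambda>v. inO (v mod 18)) (Rng m))"

lemma Om_sub: "Om m \<subseteq> set (inst_es m)"
  unfolding Om_def set_es set_Lst by auto

lemma Om_card: "card (Om m) = 9 * m + 1"
proof -
  have "inj_on ed (set (filter (\<lambda>v. inO (v mod 18)) (Rng m)))"
    using inj_ed by (rule inj_on_subset) auto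
  then have "card (Om m) = card (set (filter (\<lambda>v. inO (v mod 18)) (Rng m)))"
    unfolding Om_def by (rule card_image)
  also have "\<dots> = length (filter (\<lambda>v. inO (v mod 18)) (Rng m))"
    by (rule distinct_card) (simp add: Rng_def)
  also have "\<dots> = 9 * m + 1" unfolding Rng_def by (rule cnt_O)
  finally show ?thesis .
qed

lemma Om_matching: "is_matching (Om m)"
  unfolding is_matching_def
proof (intro ballI impI)
  fix e f assume e: "e \<in> Om m" and f: "f \<in> Om m" and ne: "e \<noteq> f"
  obtain u where u: "u \<in> set (Rng m)" "inO (u mod 18)" "e = ed u" using e unfolding Om_def by auto
  obtain u' where u': "u' \<in> set (Rng m)" "inO (u' mod 18)" "f = ed u'" using f unfolding Om_def by auto
  have g: "u \<ge> 18" "u' \<ge> 18" using u u' rng_mem by auto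
  have "u \<noteq> u'" using ne u u' by auto
  show "e \<inter> f = {}"
  proof (rule ccontr)
    assume "e \<inter> f \<noteq> {}"
    then have "\<not> (inO (u mod 18) \<and> inO (u' mod 18))" using adj_res[OF g \<open>u \<noteq> u'\<close>] u u' by blast
    then show False using u u' by simp
  qed
qed

lemma nu_ge: "max_matching_size (set (inst_es m)) \<ge> 9 * m + 1"
proof -
  have fin: "finite (card ` {M. M \<subseteq> set (inst_es m) \<and> is_matching M})"
    by (rule finite_imageI) (rule finite_subset[of _ "Pow (set (inst_es m))"], auto)
  have "card (Om m) \<in> card ` {M. M \<subseteq> set (inst_es m) \<and> is_matching M}"
    using Om_sub Om_matching by blast
  then have "card (Om m) \<le> max_matching_size (set (inst_es m))"
    unfolding max_matching_size_def using fin by simp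
  then show ?thesis using Om_card by simp
qed




theorem mainTheorem4:
  fixes k :: nat and p :: "nat \<Rightarrow> real" and \<gamma> :: real
  assumes "\<forall>i\<in>{1..k}. p i \<ge> 0"
    and "(\<Sum>i=1..k. p i) = 1"
    and "\<gamma> > 5/9"
  shows "\<exists>(es :: nat edge list) t.
           distinct es \<and> (\<forall>e\<in>set es. is_edge e) \<and>
           is_forest (set es) \<and> max_degree_le (set es) 3 \<and>
           t \<le> length es \<and>
           minindex_expected k p (take t es) < \<gamma> * real (max_matching_size (set (take t es)))"
proof -
  have g: "9 * \<gamma> - 5 > 0" using assms(3) by simp
  obtain m :: nat where m: "(1 - \<gamma>) / (9 * \<gamma> - 5) < real m" using reals_Archimedean2 by blast
  have "1 - \<gamma> < real m * (9 * \<gamma> - 5)" using m g by (simp add: divide_less_eq)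
  then have key: "5 * real m + 1 < \<gamma> * (9 * real m + 1)" by (simp add: algebra_simps)
  define E where "E = inst_es m"
  have run: "\<forall>i\<in>{1..k}. minindex_run k E i = {e\<in>set E. colE e = i}"
    unfolding E_def
    by (rule run_colors[OF distinct_es sorted_es es_colpos es_proper es_grundy])
  have "minindex_expected k p E = (\<Sum>i=1..k. p i * real (card {e\<in>set E. colE e = i}))"
    unfolding minindex_expected_def using run by simp
  also have "\<dots> \<le> (\<Sum>i=1..k. p i * (5 * real m + 1))"
  proof (rule sum_mono)
    fix i assume i: "i \<in> {1..k}"
    have "real (card {e\<in>set E. colE e = i}) \<le> 5 * real m + 1"
      using class_card[of m i] unfolding E_def by linarith
    then show "p i * real (card {e\<in>set E. colE e = i}) \<le> p i * (5 * real m + 1)"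
      using assms(1) i by (simp add: mult_left_mono)
  qed
  also have "\<dots> = 5 * real m + 1" using assms(2) by (simp add: sum_distrib_right[symmetric])
  also have "\<dots> < \<gamma> * (9 * real m + 1)" by (rule key)
  also have "\<dots> \<le> \<gamma> * real (max_matching_size (set E))"
  proof -
    have "9 * real m + 1 \<le> real (max_matching_size (set E))"
      using nu_ge[of m] unfolding E_def by linarith
    then show ?thesis using assms(3) by (simp add: mult_left_mono)
  qed
  finally have lt: "minindex_expected k p E < \<gamma> * real (max_matching_size (set E))" .
  have md: "max_degree_le (set E) 3" unfolding max_degree_le_def E_def using deg_le by simp
  show ?thesis
    apply (rule exI[of _ E], rule exI[of _ "length E"])
    using distinct_es es_edges es_forest md lt unfolding E_def by simp
qed


end
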